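(* Let $G$ be a simple, undirected, connected graph on $N$ vertices with edge set $E$ and degrees $d_j$. Let $\lambda_2$ be the second largest eigenvalue of the transition matrix $P$ of the simple random walk on $G$, and set $$k=\left\lfloor\frac{\lambda_2(N-1)+1}{\lambda_2+1}\right\rfloor,\qquad \theta=\lambda_2(N-k-2)-k+2.$$ Then $$R^+(G)\le N\left(\frac{N-k-2}{1-\lambda_2}+\frac{k}{2}+\frac{1}{\theta}\right)+\frac{1}{1-\lambda_2}\left(2|E|\sum_{j}\frac{1}{d_j}-N\right).$$
   Context: $P=(p(v,w))$ is the $N\times N$ matrix with $p(v,w)=1/d_v$ if $v,w$ are adjacent and $0$ otherwise; its eigenvalues are real, $1=\lambda_1>\lambda_2\ge\cdots\ge\lambda_N\ge-1$. For vertices $i,j$, $R_{ij}$ denotes the effective resistance between $i$ and $j$ when every edge is a unit resistor. The additive degree-Kirchhoff index is $R^+(G)=\sum_{i<j}(d_i+d_j)R_{ij}$. *)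

theory Defs
  imports "HOL-Analysis.Analysis" "Jordan_Normal_Form.Char_Poly"
begin

definition simple_graph :: "nat \<Rightarrow> (nat \<Rightarrow> nat \<Rightarrow> bool) \<Rightarrow> bool" where
  "simple_graph N E \<longleftrightarrow>
     (\<forall>u v. E u v \<longrightarrow> u < N \<and> v < N) \<and>
     (\<forall>u v. E u v \<longrightarrow> E v u) \<and>
     (\<forall>u. \<not> E u u)"

definition connected_graph :: "nat \<Rightarrow> (nat \<Rightarrow> nat \<Rightarrow> bool) \<Rightarrow> bool" where
  "connected_graph N E \<longleftrightarrow> (\<forall>u v. u < N \<longrightarrow> v < N \<longrightarrow> E\<^sup>*\<^sup>* u v)"

definition degree :: "nat \<Rightarrow> (nat \<Rightarrow> nat \<Rightarrow> bool) \<Rightarrow> nat \<Rightarrow> nat" where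
  "degree N E v = card {w. w < N \<and> E v w}"

definition num_edges :: "nat \<Rightarrow> (nat \<Rightarrow> nat \<Rightarrow> bool) \<Rightarrow> nat" where
  "num_edges N E = card {(u, v). u < v \<and> v < N \<and> E u v}"

definition transition_matrix :: "nat \<Rightarrow> (nat \<Rightarrow> nat \<Rightarrow> bool) \<Rightarrow> real mat" where
  "transition_matrix N E =
     mat N N (\<lambda>(v, w). if E v w then 1 / real (degree N E v) else 0)"

text \<open>The k-th largest root (counted with multiplicity) of a real polynomial, i.e. the
  largest x such that at least k roots (with multiplicity) are \<ge> x.\<close>
definition kth_largest_root :: "nat \<Rightarrow> real poly \<Rightarrow> real" where
  "kth_largest_root k p =
     (GREATEST x. k \<le> (\<Sum>y\<in>{y. poly p y = 0 \<and> x \<le> y}. order y p))"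

definition second_largest_eigenvalue :: "real mat \<Rightarrow> real" where
  "second_largest_eigenvalue A = kth_largest_root 2 (char_poly A)"

text \<open>Effective resistance between i and j (unit resistors on all edges): the potential
  difference x_i - x_j, where x is a potential for which a unit current enters at i and
  leaves at j, i.e. L x = e_i - e_j with L the combinatorial Laplacian.\<close>
definition effective_resistance :: "nat \<Rightarrow> (nat \<Rightarrow> nat \<Rightarrow> bool) \<Rightarrow> nat \<Rightarrow> nat \<Rightarrow> real" where
  "effective_resistance N E i j =
     (THE r. \<exists>x :: nat \<Rightarrow> real.
        (\<forall>v<N. real (degree N E v) * x v - (\<Sum>w | w < N \<and> E v w. x w)
                 = (if v = i then 1 else 0) - (if v = j then 1 else 0))
        \<and> r = x i - x j)"

definition additive_degree_kirchhoff :: "nat \<Rightarrow> (nat \<Rightarrow> nat \<Rightarrow> bool) \<Rightarrow> real" where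
  "additive_degree_kirchhoff N E =
     (\<Sum>(i, j)\<in>{(i, j). i < j \<and> j < N}.
        real (degree N E i + degree N E j) * effective_resistance N E i j)"

end

theory Submission
  imports Defs
begin

definition ip :: "nat \<Rightarrow> (nat \<Rightarrow> real) \<Rightarrow> (nat \<Rightarrow> real) \<Rightarrow> real" where
  "ip n x y = (\<Sum>i<n. x i * y i)"

definition mv :: "nat \<Rightarrow> (nat \<Rightarrow> nat \<Rightarrow> real) \<Rightarrow> (nat \<Rightarrow> real) \<Rightarrow> nat \<Rightarrow> real" where
  "mv n M x i = (\<Sum>j<n. M i j * x j)"

definition symm :: "nat \<Rightarrow> (nat \<Rightarrow> nat \<Rightarrow> real) \<Rightarrow> bool" where
  "symm n M \<longleftrightarrow> (\<forall>i<n. \<forall>j<n. M i j = M j i)"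

definition orthonormal :: "nat \<Rightarrow> nat \<Rightarrow> (nat \<Rightarrow> nat \<Rightarrow> real) \<Rightarrow> bool" where
  "orthonormal n m u \<longleftrightarrow> (\<forall>k<m. \<forall>l<m. ip n (u k) (u l) = (if k = l then 1 else 0))"

lemma ip_comm: "ip n x y = ip n y x"
  unfolding ip_def by (simp add: mult.commute)

lemma ip_sum_right: "ip n x (\<lambda>i. \<Sum>k\<in>A. f k i) = (\<Sum>k\<in>A. ip n x (f k))"
  unfolding ip_def by (simp add: sum_distrib_left sum.swap[of _ A])

lemma ip_sum_left: "ip n (\<lambda>i. \<Sum>k\<in>A. f k i) x = (\<Sum>k\<in>A. ip n (f k) x)"
  unfolding ip_def by (simp add: sum_distrib_right sum.swap[of _ A])

lemma ip_diff_right: "ip n x (\<lambda>i. y i - z i) = ip n x y - ip n x z"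
  unfolding ip_def by (simp add: algebra_simps sum_subtractf)

lemma ip_diff_left: "ip n (\<lambda>i. y i - z i) x = ip n y x - ip n z x"
  unfolding ip_def by (simp add: algebra_simps sum_subtractf)

lemma ip_scale_right: "ip n x (\<lambda>i. c * y i) = c * ip n x y"
  unfolding ip_def by (simp add: sum_distrib_left algebra_simps)

lemma ip_scale_left: "ip n (\<lambda>i. c * y i) x = c * ip n y x"
  unfolding ip_def by (simp add: sum_distrib_left algebra_simps)

lemma ip_div_right: "ip n x (\<lambda>i. y i / c) = ip n x y / c"
  unfolding ip_def by (simp add: sum_divide_distrib)

lemma ip_div_left: "ip n (\<lambda>i. y i / c) x = ip n y x / c"
  unfolding ip_def by (simp add: sum_divide_distrib)

lemma sqrt_norm_one: "(a::real) > 0 \<Longrightarrow> a / sqrt a / sqrt a = 1"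
  by (metis abs_of_pos divide_divide_eq_left divide_self_if less_irrefl real_sqrt_mult_self)

lemma ip_add_right: "ip n x (\<lambda>i. y i + z i) = ip n x y + ip n x z"
  unfolding ip_def by (simp add: algebra_simps sum.distrib)

lemma ip_add_left: "ip n (\<lambda>i. y i + z i) x = ip n y x + ip n z x"
  unfolding ip_def by (simp add: algebra_simps sum.distrib)

lemma ip_self_nonneg: "ip n x x \<ge> 0"
  unfolding ip_def by (intro sum_nonneg) auto

lemma ip_self_zero: "ip n x x = 0 \<Longrightarrow> i < n \<Longrightarrow> x i = 0"
  unfolding ip_def by (subst (asm) sum_nonneg_eq_0_iff) auto

lemma ip_cong: "(\<And>i. i < n \<Longrightarrow> x i = x' i) \<Longrightarrow> (\<And>i. i < n \<Longrightarrow> y i = y' i) \<Longrightarrow> ip n x y = ip n x' y'"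
  unfolding ip_def by (intro sum.cong) auto

lemma ip_mv_sym: assumes "symm n M" shows "ip n x (mv n M y) = ip n (mv n M x) y"
proof -
  have "ip n x (mv n M y) = (\<Sum>i<n. \<Sum>j<n. x i * M i j * y j)"
    unfolding ip_def mv_def by (simp add: sum_distrib_left algebra_simps)
  also have "\<dots> = (\<Sum>j<n. \<Sum>i<n. x i * M i j * y j)" by (rule sum.swap)
  also have "\<dots> = ip n (mv n M x) y"
    unfolding ip_def mv_def using assms unfolding symm_def
    by (intro sum.cong refl) (auto simp: sum_distrib_right sum_distrib_left mult_ac intro!: sum.cong)
  finally show ?thesis .
qed

definition resid :: "nat \<Rightarrow> nat \<Rightarrow> (nat \<Rightarrow> nat \<Rightarrow> real) \<Rightarrow> (nat \<Rightarrow> real) \<Rightarrow> nat \<Rightarrow> real" where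
  "resid n m u x = (\<lambda>i. x i - (\<Sum>k<m. ip n (u k) x * u k i))"

lemma resid_orth: assumes "orthonormal n m u" "l < m" shows "ip n (u l) (resid n m u x) = 0"
proof -
  have "ip n (u l) (resid n m u x) = ip n (u l) x - (\<Sum>k<m. ip n (u l) (\<lambda>i. ip n (u k) x * u k i))"
    unfolding resid_def by (simp add: ip_diff_right ip_sum_right)
  also have "(\<Sum>k<m. ip n (u l) (\<lambda>i. ip n (u k) x * u k i)) = (\<Sum>k<m. ip n (u k) x * (if l = k then 1 else 0))"
    using assms unfolding orthonormal_def by (intro sum.cong) (auto simp: ip_scale_right)
  also have "\<dots> = ip n (u l) x" using assms(2) by (simp add: if_distrib sum.delta cong: if_cong)
  finally show ?thesis by simp
qed

lemma resid_norm: assumes "orthonormal n m u"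
  shows "ip n (resid n m u x) (resid n m u x) = ip n x x - (\<Sum>k<m. (ip n (u k) x)^2)"
proof -
  have "ip n (resid n m u x) (resid n m u x) = ip n x (resid n m u x) - (\<Sum>k<m. ip n (\<lambda>i. ip n (u k) x * u k i) (resid n m u x))"
    by (subst (1) resid_def) (simp add: ip_diff_left ip_sum_left)
  also have "(\<Sum>k<m. ip n (\<lambda>i. ip n (u k) x * u k i) (resid n m u x)) = 0"
    using resid_orth[OF assms] by (intro sum.neutral) (auto simp: ip_scale_left)
  also have "ip n x (resid n m u x) = ip n x x - (\<Sum>k<m. ip n (u k) x * ip n x (u k))"
    unfolding resid_def by (simp add: ip_diff_right ip_sum_right ip_scale_right)
  finally show ?thesis by (simp add: ip_comm power2_eq_square)
qed

definition evec :: "nat \<Rightarrow> nat \<Rightarrow> real" where "evec j = (\<lambda>i. if i = j then 1 else 0)"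

lemma ip_evec: "j < n \<Longrightarrow> ip n x (evec j) = x j"
  unfolding ip_def evec_def by (simp add: if_distrib sum.delta cong: if_cong)

lemma ip_evec_self: "j < n \<Longrightarrow> ip n (evec j) (evec j) = 1"
  using ip_evec[of j n "evec j"] by (simp add: evec_def)

lemma orthonormal_sum_sq: assumes "orthonormal n m u"
  shows "(\<Sum>j<n. \<Sum>k<m. (u k j)^2) = real m"
proof -
  have "(\<Sum>j<n. \<Sum>k<m. (u k j)^2) = (\<Sum>k<m. ip n (u k) (u k))"
    unfolding ip_def by (subst sum.swap) (simp add: power2_eq_square)
  also have "\<dots> = (\<Sum>k<m. 1)" using assms unfolding orthonormal_def by (intro sum.cong) auto
  finally show ?thesis by simp
qed

lemma orthonormal_le: assumes "orthonormal n m u" shows "m \<le> n"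
proof -
  have "(\<Sum>k<m. (u k j)^2) \<le> 1" if "j < n" for j
  proof -
    have "(\<Sum>k<m. (ip n (u k) (evec j))^2) \<le> 1"
      using resid_norm[OF assms, of "evec j"] ip_self_nonneg[of n "resid n m u (evec j)"]
        ip_evec_self[OF that] by linarith
    thus ?thesis using that by (simp add: ip_evec)
  qed
  hence "(\<Sum>j<n. \<Sum>k<m. (u k j)^2) \<le> (\<Sum>j<n. 1)" by (intro sum_mono) auto
  thus ?thesis using orthonormal_sum_sq[OF assms] by simp
qed

lemma orthonormal_nonspan: assumes "orthonormal n m u" "m < n"
  shows "\<exists>j<n. ip n (resid n m u (evec j)) (resid n m u (evec j)) \<noteq> 0"
proof (rule ccontr)
  assume "\<not> ?thesis"
  hence "(\<Sum>k<m. (u k j)^2) = 1" if "j < n" for j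
    using resid_norm[OF assms(1), of "evec j"] ip_evec_self[OF that] that by (simp add: ip_evec)
  hence "(\<Sum>j<n. \<Sum>k<m. (u k j)^2) = real n" by simp
  thus False using orthonormal_sum_sq[OF assms(1)] assms(2) by simp
qed

lemma orthonormal_extend:
  assumes on: "orthonormal n m u" and w: "ip n w w = 1" and wu: "\<And>l. l < m \<Longrightarrow> ip n (u l) w = 0"
  shows "orthonormal n (Suc m) (u(m := w))"
  unfolding orthonormal_def
proof (intro allI impI)
  fix k l assume k: "k < Suc m" and l: "l < Suc m"
  show "ip n ((u(m := w)) k) ((u(m := w)) l) = (if k = l then 1 else 0)"
  proof (cases "k = m")
    case True
    show ?thesis
    proof (cases "l = m")
      case True thus ?thesis using \<open>k = m\<close> w by simp
    next
      case False
      hence "l < m" using l by simp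
      thus ?thesis using \<open>k = m\<close> False wu[of l] ip_comm[of n w "u l"] by simp
    qed
  next
    case False
    hence km: "k < m" using k by simp
    show ?thesis
    proof (cases "l = m")
      case True thus ?thesis using False km wu by simp
    next
      case False
      hence "l < m" using l by simp
      thus ?thesis using \<open>k \<noteq> m\<close> False km on unfolding orthonormal_def by simp
    qed
  qed
qed

lemma orthonormal_complete: assumes "orthonormal n n u" "i < n" "j < n"
  shows "(\<Sum>k<n. u k i * u k j) = (if i = j then 1 else 0)"
proof -
  let ?r = "resid n n u (evec j)"
  have "ip n ?r ?r = 0"
  proof (rule ccontr)
    assume nz: "ip n ?r ?r \<noteq> 0"
    have pos: "ip n ?r ?r > 0" using nz ip_self_nonneg[of n ?r] by linarith
    define u' where "u' = u(n := (\<lambda>i. ?r i / sqrt (ip n ?r ?r)))"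
    have "ip n (\<lambda>i. ?r i / sqrt (ip n ?r ?r)) (\<lambda>i. ?r i / sqrt (ip n ?r ?r)) = 1"
      using sqrt_norm_one[OF pos] by (simp add: ip_div_left ip_div_right)
    moreover have "ip n (u l) (\<lambda>i. ?r i / sqrt (ip n ?r ?r)) = 0" if "l < n" for l
      using resid_orth[OF assms(1) that] by (simp add: ip_div_right)
    ultimately have "orthonormal n (Suc n) u'"
      unfolding u'_def by (intro orthonormal_extend[OF assms(1)]) auto
    from orthonormal_le[OF this] show False by simp
  qed
  hence "?r i = 0" using ip_self_zero assms by blast
  hence "evec j i - (\<Sum>k<n. ip n (u k) (evec j) * u k i) = 0" unfolding resid_def .
  moreover have "(\<Sum>k<n. ip n (u k) (evec j) * u k i) = (\<Sum>k<n. u k i * u k j)"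
    using assms(3) by (simp add: ip_evec mult.commute)
  ultimately have "(\<Sum>k<n. u k i * u k j) = evec j i" by simp
  thus ?thesis by (simp add: evec_def)
qed

lemma cont_ip_fixed: "continuous_on UNIV (\<lambda>x::nat\<Rightarrow>real. ip n a x)"
  unfolding ip_def by (intro continuous_intros continuous_on_product_coordinates)

lemma cont_quad: "continuous_on UNIV (\<lambda>x::nat\<Rightarrow>real. ip n x (mv n M x))"
  unfolding ip_def mv_def by (intro continuous_intros continuous_on_product_coordinates)

lemma cont_norm: "continuous_on UNIV (\<lambda>x::nat\<Rightarrow>real. ip n x x)"
  unfolding ip_def by (intro continuous_intros continuous_on_product_coordinates)

lemma compact_box: "compact (PiE UNIV (\<lambda>i::nat. if i < n then {-1..1::real} else {0}))"
proof -
  have "compactin (product_topology (\<lambda>i. euclidean) UNIV) (PiE UNIV (\<lambda>i::nat. if i < n then {-1..1::real} else {0}))"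
    by (subst compactin_PiE) auto
  thus ?thesis by (simp add: euclidean_product_topology)
qed

lemma sq_le_ip: "i < n \<Longrightarrow> (x i)^2 \<le> ip n x x"
  unfolding ip_def power2_eq_square by (rule member_le_sum) auto

definition Kset :: "nat \<Rightarrow> nat \<Rightarrow> (nat \<Rightarrow> nat \<Rightarrow> real) \<Rightarrow> (nat \<Rightarrow> real) set" where
  "Kset n m u = {x. (\<forall>i. n \<le> i \<longrightarrow> x i = 0) \<and> (\<forall>k<m. ip n (u k) x = 0) \<and> ip n x x = 1}"

lemma compact_Kset: "compact (Kset n m u)"
proof -
  have sub: "Kset n m u = PiE UNIV (\<lambda>i::nat. if i < n then {-1..1::real} else {0}) \<inter>
     ((\<Inter>i\<in>{n..}. {x. x i = 0}) \<inter> (\<Inter>k\<in>{..<m}. {x. ip n (u k) x = 0}) \<inter> {x. ip n x x = 1})"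
  proof (intro equalityI subsetI)
    fix x assume x: "x \<in> Kset n m u"
    have "x i \<in> {-1..1}" if "i < n" for i
    proof -
      have "(x i)^2 \<le> 1" using sq_le_ip[OF that, of x] x unfolding Kset_def by simp
      thus ?thesis using abs_square_le_1[of "x i"] by auto
    qed
    thus "x \<in> PiE UNIV (\<lambda>i::nat. if i < n then {-1..1::real} else {0}) \<inter>
     ((\<Inter>i\<in>{n..}. {x. x i = 0}) \<inter> (\<Inter>k\<in>{..<m}. {x. ip n (u k) x = 0}) \<inter> {x. ip n x x = 1})"
      using x unfolding Kset_def by (auto simp: PiE_iff)
  qed (auto simp: Kset_def)
  show ?thesis unfolding sub
    by (intro compact_Int_closed compact_box closed_Int closed_INT closed_Collect_eq
        continuous_on_product_coordinates cont_ip_fixed cont_norm continuous_on_const ballI)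
qed

lemma perturb_zero: fixes c D :: real assumes "\<And>t. 2 * t * c \<le> t^2 * D" shows "c = 0"
proof (rule ccontr)
  assume c: "c \<noteq> 0"
  define e where "e = 1 / (\<bar>D\<bar> + 1)"
  have e: "e > 0" unfolding e_def by simp
  have c2: "e * c^2 > 0" using c e by simp
  have "2 * (e * c) * c \<le> (e * c)^2 * D" by (rule assms)
  hence "(e * c^2) * 2 \<le> (e * c^2) * (e * D)" by (simp add: power2_eq_square algebra_simps)
  hence "2 \<le> e * D" using c2 by (simp add: mult_le_cancel_left_pos)
  moreover have "e * D < 1"
  proof -
    have "e * D \<le> e * \<bar>D\<bar>" using e by (intro mult_left_mono) auto
    also have "\<dots> < e * (\<bar>D\<bar> + 1)" using e by simp
    also have "\<dots> = 1" unfolding e_def by simp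
    finally show ?thesis .
  qed
  ultimately show False by linarith
qed

lemma mv_lin: "mv n M (\<lambda>i. a i + t * b i) i = mv n M a i + t * mv n M b i"
  unfolding mv_def by (simp add: algebra_simps sum.distrib sum_distrib_left)

lemma mv_cong: "(\<And>i. i < n \<Longrightarrow> x i = y i) \<Longrightarrow> mv n M x j = mv n M y j"
  unfolding mv_def by (intro sum.cong) auto

lemma max_is_eigen:
  assumes S: "symm n M" and on: "orthonormal n m u"
    and ev: "\<And>k i. k < m \<Longrightarrow> i < n \<Longrightarrow> mv n M (u k) i = \<mu> k * u k i"
    and vK: "v \<in> Kset n m u"
    and vmax: "\<And>x. x \<in> Kset n m u \<Longrightarrow> ip n x (mv n M x) \<le> ip n v (mv n M v)"
  shows "\<And>i. i < n \<Longrightarrow> mv n M v i = ip n v (mv n M v) * v i"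
proof -
  define q where "q = ip n v (mv n M v)"
  have key: "ip n y (mv n M v) = 0" if ys: "\<And>i. n \<le> i \<Longrightarrow> y i = 0"
      and yu: "\<And>k. k < m \<Longrightarrow> ip n (u k) y = 0" and yv: "ip n v y = 0" for y
  proof (rule perturb_zero[where D = "q * ip n y y - ip n y (mv n M y)"])
    fix t :: real
    define z where "z = (\<lambda>i. v i + t * y i)"
    have vv: "ip n v v = 1" using vK unfolding Kset_def by simp
    have zz: "ip n z z = 1 + t^2 * ip n y y"
      unfolding z_def using vv yv
      by (simp add: ip_add_left ip_add_right ip_scale_left ip_scale_right ip_comm[of n y v] power2_eq_square algebra_simps)
    have zpos: "ip n z z > 0" unfolding zz using ip_self_nonneg[of n y] by (simp add: add_pos_nonneg)
    define s where "s = sqrt (ip n z z)"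
    have spos: "s > 0" using zpos unfolding s_def by simp
    have ss: "s * s = ip n z z" unfolding s_def using zpos by simp
    define w where "w = (\<lambda>i. z i / s)"
    have vs: "\<And>i. n \<le> i \<Longrightarrow> v i = 0" using vK unfolding Kset_def by simp
    have vu: "\<And>k. k < m \<Longrightarrow> ip n (u k) v = 0" using vK unfolding Kset_def by simp
    have zs: "\<And>i. n \<le> i \<Longrightarrow> z i = 0" unfolding z_def using vs ys by simp
    have zu: "\<And>k. k < m \<Longrightarrow> ip n (u k) z = 0" unfolding z_def using vu yu
      by (simp add: ip_add_right ip_scale_right)
    have "ip n w w = ip n z z / s / s" unfolding w_def by (simp add: ip_div_left ip_div_right)
    also have "\<dots> = 1" unfolding s_def by (rule sqrt_norm_one[OF zpos])
    finally have "w \<in> Kset n m u"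
      unfolding Kset_def w_def using zs zu by (auto simp: ip_div_right)
    hence "ip n w (mv n M w) \<le> q" using vmax unfolding q_def by blast
    moreover have "ip n w (mv n M w) = ip n z (mv n M z) / (s * s)"
    proof -
      have "mv n M w = (\<lambda>i. mv n M z i / s)"
        unfolding w_def mv_def by (simp add: sum_divide_distrib)
      thus ?thesis unfolding w_def by (simp add: ip_div_left ip_div_right)
    qed
    ultimately have "ip n z (mv n M z) \<le> q * (s * s)"
      using spos by (simp add: divide_le_eq mult.commute)
    moreover have "mv n M z = (\<lambda>i. mv n M v i + t * mv n M y i)"
      unfolding z_def by (rule ext, rule mv_lin)
    moreover have "ip n y (mv n M v) = ip n v (mv n M y)"
      using ip_mv_sym[OF S, of y v] ip_comm[of n "mv n M y" v] by simp
    ultimately have "q + 2 * t * ip n y (mv n M v) + t^2 * ip n y (mv n M y) \<le> q * (1 + t^2 * ip n y y)"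
      unfolding z_def ss zz q_def using vv yv ip_comm[of n y v]
      by (simp add: ip_add_left ip_add_right ip_scale_left ip_scale_right power2_eq_square algebra_simps)
    thus "2 * t * ip n y (mv n M v) \<le> t^2 * (q * ip n y y - ip n y (mv n M y))"
      by (simp add: algebra_simps)
  qed
  define y where "y = (\<lambda>i. if i < n then mv n M v i - q * v i else 0)"
  have ys: "\<And>i. n \<le> i \<Longrightarrow> y i = 0" unfolding y_def by simp
  have yeq: "ip n a y = ip n a (mv n M v) - q * ip n a v" for a
  proof -
    have "ip n a y = ip n a (\<lambda>i. mv n M v i - q * v i)" by (rule ip_cong) (auto simp: y_def)
    thus ?thesis by (simp add: ip_diff_right ip_scale_right)
  qed
  have vu: "\<And>k. k < m \<Longrightarrow> ip n (u k) v = 0" using vK unfolding Kset_def by simp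
  have yu: "ip n (u k) y = 0" if k: "k < m" for k
  proof -
    have "ip n (u k) (mv n M v) = ip n (mv n M (u k)) v" by (rule ip_mv_sym[OF S])
    also have "\<dots> = ip n (\<lambda>i. \<mu> k * u k i) v" by (rule ip_cong) (auto simp: ev k)
    finally show ?thesis using yeq vu[OF k] by (simp add: ip_scale_left)
  qed
  have vv: "ip n v v = 1" using vK unfolding Kset_def by simp
  have yv: "ip n v y = 0" using yeq[of v] vv unfolding q_def by simp
  have "ip n y y = 0" using key[OF ys yu yv] yeq[of y] yv ip_comm[of n y v] by simp
  hence "y i = 0" if "i < n" for i using ip_self_zero that by blast
  thus "\<And>i. i < n \<Longrightarrow> mv n M v i = ip n v (mv n M v) * v i" unfolding y_def q_def by auto
qed

lemma Kset_nonempty: assumes "orthonormal n m u" "m < n" shows "Kset n m u \<noteq> {}"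
proof -
  obtain j where j: "j < n" and nz: "ip n (resid n m u (evec j)) (resid n m u (evec j)) \<noteq> 0"
    using orthonormal_nonspan[OF assms] by blast
  let ?r = "resid n m u (evec j)"
  have pos: "ip n ?r ?r > 0" using nz ip_self_nonneg[of n ?r] by linarith
  define c where "c = sqrt (ip n ?r ?r)"
  define x where "x = (\<lambda>i. if i < n then ?r i / c else 0)"
  have ipx: "ip n a x = ip n a ?r / c" for a
  proof -
    have "ip n a x = ip n a (\<lambda>i. ?r i / c)" by (rule ip_cong) (auto simp: x_def)
    thus ?thesis by (simp only: ip_div_right)
  qed
  have "ip n x x = ip n x ?r / c" by (rule ipx)
  also have "ip n x ?r = ip n ?r x" by (rule ip_comm)
  also have "ip n ?r x = ip n ?r ?r / c" by (rule ipx)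
  also have "ip n ?r ?r / c / c = 1" unfolding c_def by (rule sqrt_norm_one[OF pos])
  finally have xx: "ip n x x = 1" .
  have xs: "\<forall>i. n \<le> i \<longrightarrow> x i = 0" by (simp add: x_def)
  have xu: "\<forall>k<m. ip n (u k) x = 0" using resid_orth[OF assms(1)] by (simp add: ipx)
  have "x \<in> Kset n m u" unfolding Kset_def using xx xs xu by blast
  thus ?thesis by blast
qed

lemma spectral_step:
  assumes S: "symm n M" and on: "orthonormal n m u" and mn: "m < n"
    and ev: "\<And>k i. k < m \<Longrightarrow> i < n \<Longrightarrow> mv n M (u k) i = \<mu> k * u k i"
  shows "\<exists>v c. (\<forall>k<m. ip n (u k) v = 0) \<and> ip n v v = 1 \<and> (\<forall>i<n. mv n M v i = c * v i)"
proof -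
  have c: "continuous_on (Kset n m u) (\<lambda>x. ip n x (mv n M x))"
    by (rule continuous_on_subset[OF cont_quad]) simp
  obtain v where vK: "v \<in> Kset n m u" and vmax: "\<forall>x\<in>Kset n m u. ip n x (mv n M x) \<le> ip n v (mv n M v)"
    using continuous_attains_sup[OF compact_Kset Kset_nonempty[OF on mn] c] by blast
  have "\<And>i. i < n \<Longrightarrow> mv n M v i = ip n v (mv n M v) * v i"
    by (rule max_is_eigen[OF S on ev vK]) (use vmax in auto)
  thus ?thesis using vK unfolding Kset_def by blast
qed

lemma spectral_aux:
  assumes S: "symm n M" and u0: "ip n u0 u0 = 1" and ev0: "\<And>i. i < n \<Longrightarrow> mv n M u0 i = \<mu>0 * u0 i"
  shows "1 \<le> m \<Longrightarrow> m \<le> n \<Longrightarrow> \<exists>u \<mu>. u 0 = u0 \<and> \<mu> 0 = \<mu>0 \<and> orthonormal n m u \<and>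
      (\<forall>k<m. \<forall>i<n. mv n M (u k) i = \<mu> k * u k i)"
proof (induction m)
  case 0 thus ?case by simp
next
  case (Suc m)
  show ?case
  proof (cases "m = 0")
    case True
    thus ?thesis using u0 ev0 by (intro exI[of _ "\<lambda>_. u0"] exI[of _ "\<lambda>_. \<mu>0"]) (auto simp: orthonormal_def)
  next
    case False
    then obtain u \<mu> where u: "u 0 = u0" "\<mu> 0 = \<mu>0" "orthonormal n m u"
      "\<forall>k<m. \<forall>i<n. mv n M (u k) i = \<mu> k * u k i" using Suc by auto
    obtain v c where v: "\<forall>k<m. ip n (u k) v = 0" "ip n v v = 1" "\<forall>i<n. mv n M v i = c * v i"
      using spectral_step[OF S u(3), of \<mu>] Suc.prems u(4) by auto
    have on': "orthonormal n (Suc m) (u(m := v))"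
      by (rule orthonormal_extend[OF u(3) v(2)]) (use v(1) in auto)
    have ev': "\<forall>k<Suc m. \<forall>i<n. mv n M ((u(m := v)) k) i = (\<mu>(m := c)) k * (u(m := v)) k i"
      using u(4) v(3) by (auto simp: less_Suc_eq)
    have e1: "(u(m := v)) 0 = u0" "(\<mu>(m := c)) 0 = \<mu>0" using u(1,2) False by auto
    show ?thesis
      apply (rule exI[of _ "u(m := v)"])
      apply (rule exI[of _ "\<mu>(m := c)"])
      apply (intro conjI)
         apply (rule e1(1))
        apply (rule e1(2))
       apply (rule on')
      apply (rule ev')
      done
  qed
qed

theorem spectral:
  assumes S: "symm n M" and n: "1 \<le> n" and u0: "ip n u0 u0 = 1" and ev0: "\<And>i. i < n \<Longrightarrow> mv n M u0 i = \<mu>0 * u0 i"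
  shows "\<exists>u \<mu>. u 0 = u0 \<and> \<mu> 0 = \<mu>0 \<and> orthonormal n n u \<and>
      (\<forall>k<n. \<forall>i<n. mv n M (u k) i = \<mu> k * u k i)"
  using spectral_aux[OF S u0 ev0 n order.refl] .

lemma chord_id: fixes a b c :: real assumes "a > 0" "b > 0" "c > 0"
  shows "1 / a + (a - c) / (a * b) - 1 / c = (a - c) * (c - b) / (a * b * c)"
  using assms by (simp add: field_simps)

lemma aux_left: fixes a y :: real assumes "a \<noteq> 0"
  shows "1 / a + 1 / (2 * a) * (y - (1 - a)) = 1 / (1 - (-1)) + (y - (-1)) / ((1 - (-1)) * a)"
  using assms by (simp add: field_simps)

lemma chord_bound:
  fixes p q x :: real assumes "p \<le> x" "x \<le> q" "q < 1"
  shows "1 / (1 - x) \<le> 1 / (1 - p) + (x - p) / ((1 - p) * (1 - q))"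
proof -
  have a: "1 - p > 0" "1 - q > 0" "1 - x > 0" using assms by auto
  have e1: "(1 - p) - (1 - x) = x - p" "(1 - x) - (1 - q) = q - x" by simp_all
  have "1 / (1 - p) + (x - p) / ((1 - p) * (1 - q)) - 1 / (1 - x)
     = (x - p) * (q - x) / ((1 - p) * (1 - q) * (1 - x))"
    using chord_id[OF a] unfolding e1 .
  moreover have "(x - p) * (q - x) / ((1 - p) * (1 - q) * (1 - x)) \<ge> 0"
    using a assms by (intro divide_nonneg_pos mult_nonneg_nonneg) auto
  ultimately show ?thesis by linarith
qed

lemma hsum_bound:
  fixes x :: "nat \<Rightarrow> real" and K t l :: real
  assumes fin: "finite I" and rng: "\<And>i. i \<in> I \<Longrightarrow> -1 \<le> x i \<and> x i \<le> l"
    and sum: "(\<Sum>i\<in>I. x i) = -1" and tl: "t \<le> l"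
    and teq: "t = K - 1 - (real (card I) - K - 1) * l" and Kint: "K \<in> \<int>" and tm: "-1 \<le> t"
  shows "(\<Sum>i\<in>I. max 0 (t - x i)) \<le> K * (t + 1)"
proof -
  define P where "P = {i\<in>I. x i < t}"
  define n where "n = real (card I)"
  have finP: "finite P" using fin unfolding P_def by simp
  have PI: "P \<subseteq> I" unfolding P_def by auto
  have eq1: "(\<Sum>i\<in>I. max 0 (t - x i)) = (\<Sum>i\<in>P. t - x i)"
  proof -
    have "(\<Sum>i\<in>I. max 0 (t - x i)) = (\<Sum>i\<in>P. max 0 (t - x i))"
      using fin PI by (intro sum.mono_neutral_right) (auto simp: P_def)
    also have "\<dots> = (\<Sum>i\<in>P. t - x i)" by (intro sum.cong) (auto simp: P_def)
    finally show ?thesis .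
  qed
  have b1: "(\<Sum>i\<in>P. t - x i) \<le> real (card P) * (t + 1)"
  proof -
    have "(\<Sum>i\<in>P. t - x i) \<le> (\<Sum>i\<in>P. t + 1)" using rng PI by (intro sum_mono) force
    thus ?thesis by simp
  qed
  have b2: "(\<Sum>i\<in>P. t - x i) \<le> n * t + 1 + (n - real (card P)) * (l - t)"
  proof -
    have split: "(\<Sum>i\<in>I. t - x i) = (\<Sum>i\<in>P. t - x i) + (\<Sum>i\<in>I-P. t - x i)"
      using sum.subset_diff[OF PI fin, of "\<lambda>i. t - x i"] by linarith
    have "(\<Sum>i\<in>I. t - x i) = n * t + 1" using sum unfolding n_def by (simp add: sum_subtractf)
    moreover have "(\<Sum>i\<in>I-P. x i - t) \<le> (\<Sum>i\<in>I-P. l - t)" using rng by (intro sum_mono) auto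
    moreover have "card (I - P) = card I - card P" using fin PI by (simp add: card_Diff_subset finite_subset)
    moreover have "card P \<le> card I" using fin PI by (simp add: card_mono)
    ultimately show ?thesis using split by (simp add: sum_subtractf n_def of_nat_diff)
  qed
  show ?thesis
  proof (cases "real (card P) \<le> K")
    case True
    have "real (card P) * (t + 1) \<le> K * (t + 1)" using True tm by (intro mult_right_mono) auto
    thus ?thesis unfolding eq1 using b1 by linarith
  next
    case False
    from Kint obtain z where z: "K = of_int z" by (auto elim: Ints_cases)
    have "of_int z < (of_int (int (card P)) :: real)" using False z by simp
    hence "z < int (card P)" by (simp only: of_int_less_iff)
    hence "z + 1 \<le> int (card P)" by simp
    hence "of_int (z + 1) \<le> (of_int (int (card P)) :: real)" by (simp only: of_int_le_iff)
    hence "real (card P) \<ge> K + 1" unfolding z by simp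
    hence "(n - real (card P)) * (l - t) \<le> (n - K - 1) * (l - t)" using tl by (intro mult_right_mono) auto
    moreover have "n * t + 1 + (n - K - 1) * (l - t) = K * (t + 1)" using teq unfolding n_def by (simp add: algebra_simps)
    ultimately show ?thesis unfolding eq1 using b2 by linarith
  qed
qed

lemma convex_bound:
  fixes x :: "nat \<Rightarrow> real" and l :: real and N :: nat
  assumes fin: "finite I" and cI: "card I = N - 1" and N: "N \<ge> 2"
    and rng: "\<And>i. i \<in> I \<Longrightarrow> -1 \<le> x i \<and> x i \<le> l" and l1: "l < 1"
    and sum: "(\<Sum>i\<in>I. x i) = -1"
  defines "k \<equiv> \<lfloor>(l * (real N - 1) + 1) / (l + 1)\<rfloor>"
  defines "theta \<equiv> l * (real N - real_of_int k - 2) - real_of_int k + 2"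
  shows "(\<Sum>i\<in>I. 1 / (1 - x i)) \<le> (real N - real_of_int k - 2) / (1 - l) + real_of_int k / 2 + 1 / theta"
proof (cases "l = -1")
  case True
  hence xi: "x i = -1" if "i \<in> I" for i using rng[OF that] by auto
  hence "(\<Sum>i\<in>I. x i) = - real (card I)" by simp
  hence cI1: "card I = 1" using sum by simp
  hence N2: "N = 2" using cI N by simp
  have k0: "k = 0" unfolding k_def True by simp
  have "(\<Sum>i\<in>I. 1 / (1 - x i)) = (\<Sum>i\<in>I. 1/2)" using xi by (intro sum.cong) auto
  also have "\<dots> = 1/2" using cI1 by simp
  finally show ?thesis unfolding theta_def k0 N2 True by simp
next
  case False
  have "I \<noteq> {}" using cI N by auto
  then obtain i0 where "i0 \<in> I" by blast
  hence lm: "l > -1" using rng[of i0] False by linarith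
  define K where "K = real_of_int k"
  define n where "n = real N - 1"
  have cIr: "real (card I) = n" using cI N unfolding n_def by (simp add: of_nat_diff)
  define q where "q = (l * (real N - 1) + 1) / (l + 1)"
  have Kq: "K \<le> q" "q < K + 1" unfolding K_def k_def q_def by linarith+
  have lp: "l + 1 > 0" using lm by simp
  define t where "t = K - 1 - (real N - K - 2) * l"
  have th: "theta = 1 - t" unfolding theta_def t_def K_def by simp
  have tl: "t \<le> l"
  proof -
    have "K * (l + 1) \<le> l * (real N - 1) + 1" using Kq(1) lp unfolding q_def by (simp add: le_divide_eq)
    thus ?thesis unfolding t_def by (simp add: algebra_simps)
  qed
  have tm: "-1 < t"
  proof -
    have "l * (real N - 1) + 1 < (K + 1) * (l + 1)" using Kq(2) lp unfolding q_def by (simp add: divide_less_eq)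
    thus ?thesis unfolding t_def by (simp add: algebra_simps)
  qed
  have t1: "1 - t > 0" using tl l1 by simp
  have l1': "1 - l > 0" using l1 by simp
  define s1 where "s1 = 1 / (2 * (1 - t))"
  define s2 where "s2 = 1 / ((1 - t) * (1 - l))"
  have s12: "s1 \<le> s2"
  proof -
    have "(1 - t) * (1 - l) \<le> 2 * (1 - t)"
      using mult_nonneg_nonneg[of "1 + l" "1 - t"] t1 lm by (simp add: algebra_simps)
    thus ?thesis unfolding s1_def s2_def using t1 l1' lm
      by (intro divide_left_mono mult_pos_pos) auto
  qed
  define g where "g = (\<lambda>y. 1 / (1 - t) + s2 * (y - t) + (s2 - s1) * max 0 (t - y))"
  have fg: "1 / (1 - y) \<le> g y" if "-1 \<le> y" "y \<le> l" for y
  proof (cases "y \<le> t")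
    case True
    have "1 / (1 - y) \<le> 1 / (1 - (-1)) + (y - (-1)) / ((1 - (-1)) * (1 - t))"
      by (rule chord_bound) (use that True t1 in auto)
    moreover have "g y = 1 / (1 - t) + s1 * (y - t)"
      unfolding g_def using True by (simp add: max_def algebra_simps)
    moreover have "1 / (1 - t) + s1 * (y - t) = 1 / (1 - (-1)) + (y - (-1)) / ((1 - (-1)) * (1 - t))"
      using aux_left[of "1 - t" y] t1 unfolding s1_def by simp
    ultimately show ?thesis by simp
  next
    case False
    have "1 / (1 - y) \<le> 1 / (1 - t) + (y - t) / ((1 - t) * (1 - l))"
      by (rule chord_bound) (use that False l1 in auto)
    moreover have "g y = 1 / (1 - t) + (y - t) / ((1 - t) * (1 - l))"
      unfolding g_def s2_def using False by simp
    ultimately show ?thesis by simp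
  qed
  have "(\<Sum>i\<in>I. 1 / (1 - x i)) \<le> (\<Sum>i\<in>I. g (x i))" using rng fg by (intro sum_mono) auto
  also have "(\<Sum>i\<in>I. g (x i)) = n / (1 - t) + s2 * (-1 - n * t) + (s2 - s1) * (\<Sum>i\<in>I. max 0 (t - x i))"
    unfolding g_def using sum cIr by (simp add: sum.distrib sum_subtractf sum_distrib_left[symmetric] algebra_simps)
  also have "\<dots> \<le> n / (1 - t) + s2 * (-1 - n * t) + (s2 - s1) * (K * (t + 1))"
  proof -
    have "(\<Sum>i\<in>I. max 0 (t - x i)) \<le> K * (t + 1)"
      by (rule hsum_bound[OF fin rng sum tl]) (use tm in \<open>auto simp: cIr t_def n_def K_def\<close>)
    thus ?thesis using s12 by (simp add: mult_left_mono)
  qed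
  also have "\<dots> = (real N - K - 2) / (1 - l) + K / 2 + 1 / (1 - t)"
  proof -
    define a b where "a = 1 - t" and "b = 1 - l"
    have anz: "a \<noteq> 0" "b \<noteq> 0" using t1 l1' unfolding a_def b_def by simp_all
    have tt: "t = 1 - a" "l = 1 - b" unfolding a_def b_def by simp_all
    have rel: "a = real N - 2*K - b*real N + b*K + 2*b"
      unfolding a_def b_def t_def by (simp add: algebra_simps)
    have "n / (1 - t) + s2 * (-1 - n * t) + (s2 - s1) * (K * (t + 1)) - ((real N - K - 2) / (1 - l) + K / 2 + 1 / (1 - t))
       = (a + b*real N - 2*b - real N + 2*K - b*K) / (a * b)"
      unfolding s1_def s2_def n_def using anz by (simp add: tt field_simps)
    also have "a + b*real N - 2*b - real N + 2*K - b*K = 0" using rel by simp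
    finally show ?thesis by simp
  qed
  finally show ?thesis unfolding th K_def .
qed

locale sgraph =
  fixes N :: nat and E :: "nat \<Rightarrow> nat \<Rightarrow> bool"
  assumes sg: "simple_graph N E" and cg: "connected_graph N E" and N2: "N \<ge> 2"
begin

definition A :: "nat \<Rightarrow> nat \<Rightarrow> real" where "A v w = (if E v w then 1 else 0)"
definition d :: "nat \<Rightarrow> real" where "d v = real (degree N E v)"
definition vol :: real where "vol = (\<Sum>v<N. d v)"
definition sq :: "nat \<Rightarrow> real" where "sq v = sqrt (d v)"
definition S :: "nat \<Rightarrow> nat \<Rightarrow> real" where "S v w = A v w / (sq v * sq w)"
definition u0 :: "nat \<Rightarrow> real" where "u0 v = sq v / sqrt vol"

lemma E_bound: "E v w \<Longrightarrow> v < N \<and> w < N" using sg unfolding simple_graph_def by blast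
lemma E_sym: "E v w \<Longrightarrow> E w v" using sg unfolding simple_graph_def by blast
lemma E_irr: "\<not> E v v" using sg unfolding simple_graph_def by blast

lemma A_sym: "A v w = A w v"
proof -
  have "E v w = E w v" using E_sym by blast
  thus ?thesis unfolding A_def by simp
qed
lemma A_nonneg: "A v w \<ge> 0" unfolding A_def by simp
lemma A_diag: "A v v = 0" unfolding A_def using E_irr by simp

lemma d_sum: "d v = (\<Sum>w<N. A v w)"
proof -
  have "(\<Sum>w<N. A v w) = (\<Sum>w\<in>{..<N}. if E v w then 1 else 0)" by (simp add: A_def)
  also have "\<dots> = (\<Sum>w\<in>{w\<in>{..<N}. E v w}. 1)" by (rule sum.inter_filter[symmetric]) simp
  also have "{w\<in>{..<N}. E v w} = {w. w < N \<and> E v w}" by auto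
  finally show ?thesis unfolding d_def degree_def by simp
qed

lemma nbr_sum: "(\<Sum>w | w < N \<and> E v w. x w) = (\<Sum>w<N. A v w * x w)"
proof -
  have "(\<Sum>w<N. A v w * x w) = (\<Sum>w\<in>{..<N}. if E v w then x w else 0)"
    by (intro sum.cong refl) (simp add: A_def)
  also have "\<dots> = (\<Sum>w\<in>{w\<in>{..<N}. E v w}. x w)" by (rule sum.inter_filter[symmetric]) simp
  also have "{w\<in>{..<N}. E v w} = {w. w < N \<and> E v w}" by auto
  finally show ?thesis by simp
qed

lemma d_nonneg: "d v \<ge> 0" unfolding d_def by simp

lemma d_pos: assumes "v < N" shows "d v \<ge> 1"
proof -
  define w where "w = (if v = 0 then 1 else 0::nat)"
  have w: "w < N" "w \<noteq> v" using N2 unfolding w_def by auto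
  have "E\<^sup>*\<^sup>* v w" using cg assms w unfolding connected_graph_def by blast
  then obtain y where "E v y"
    by (rule converse_rtranclpE) (use w in auto)
  hence "y \<in> {w. w < N \<and> E v w}" using E_bound by blast
  hence ne: "{w. w < N \<and> E v w} \<noteq> {}" by blast
  have fin: "finite {w. w < N \<and> E v w}" by simp
  have "0 < card {w. w < N \<and> E v w}" using ne fin by (simp only: card_gt_0_iff) simp
  hence "1 \<le> card {w. w < N \<and> E v w}" by simp
  thus ?thesis unfolding d_def degree_def by simp
qed

lemma sq_sq: "sq v * sq v = d v" unfolding sq_def using d_nonneg[of v] by simp
lemma sq_pos: "v < N \<Longrightarrow> sq v > 0" unfolding sq_def using d_pos[of v] by simp

lemma vol_pos: "vol > 0"
proof -
  have "vol \<ge> (\<Sum>v<N. 1)" unfolding vol_def using d_pos by (intro sum_mono) auto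
  thus ?thesis using N2 by simp
qed

lemma symm_S: "symm N S" unfolding symm_def S_def using A_sym by (simp add: mult.commute)

lemma S_diag: "S v v = 0" unfolding S_def A_diag by simp

lemma const_on_edges:
  assumes h: "\<And>v w. E v w \<Longrightarrow> y v = y w" and v: "v < N"
  shows "y v = y 0"
proof -
  have "E\<^sup>*\<^sup>* 0 v" using cg v N2 unfolding connected_graph_def by auto
  hence "y 0 = y v" by (induction rule: rtranclp_induct) (auto dest: h)
  thus ?thesis by simp
qed

lemma quad_minus:
  "(\<Sum>v<N. \<Sum>w<N. A v w * (z v - z w)^2) = 2 * (\<Sum>v<N. d v * (z v)^2) - 2 * (\<Sum>v<N. \<Sum>w<N. A v w * z v * z w)"
proof -
  have e1: "(\<Sum>v<N. \<Sum>w<N. A v w * (z v)^2) = (\<Sum>v<N. d v * (z v)^2)"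
    by (simp add: d_sum sum_distrib_right)
  have e2: "(\<Sum>v<N. \<Sum>w<N. A v w * (z w)^2) = (\<Sum>v<N. d v * (z v)^2)"
    by (subst sum.swap) (simp add: d_sum sum_distrib_right A_sym)
  have "(\<Sum>v<N. \<Sum>w<N. A v w * (z v - z w)^2)
      = (\<Sum>v<N. \<Sum>w<N. A v w * (z v)^2 + A v w * (z w)^2 - 2 * (A v w * z v * z w))"
    by (intro sum.cong refl) (simp add: power2_eq_square algebra_simps)
  also have "\<dots> = (\<Sum>v<N. \<Sum>w<N. A v w * (z v)^2) + (\<Sum>v<N. \<Sum>w<N. A v w * (z w)^2)
      - 2 * (\<Sum>v<N. \<Sum>w<N. A v w * z v * z w)"
    by (simp add: sum.distrib sum_subtractf sum_distrib_left)
  finally show ?thesis using e1 e2 by simp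
qed

lemma quad_plus:
  "(\<Sum>v<N. \<Sum>w<N. A v w * (z v + z w)^2) = 2 * (\<Sum>v<N. d v * (z v)^2) + 2 * (\<Sum>v<N. \<Sum>w<N. A v w * z v * z w)"
proof -
  have e1: "(\<Sum>v<N. \<Sum>w<N. A v w * (z v)^2) = (\<Sum>v<N. d v * (z v)^2)"
    by (simp add: d_sum sum_distrib_right)
  have e2: "(\<Sum>v<N. \<Sum>w<N. A v w * (z w)^2) = (\<Sum>v<N. d v * (z v)^2)"
    by (subst sum.swap) (simp add: d_sum sum_distrib_right A_sym)
  have "(\<Sum>v<N. \<Sum>w<N. A v w * (z v + z w)^2)
      = (\<Sum>v<N. \<Sum>w<N. A v w * (z v)^2 + A v w * (z w)^2 + 2 * (A v w * z v * z w))"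
    by (intro sum.cong refl) (simp add: power2_eq_square algebra_simps)
  also have "\<dots> = (\<Sum>v<N. \<Sum>w<N. A v w * (z v)^2) + (\<Sum>v<N. \<Sum>w<N. A v w * (z w)^2)
      + 2 * (\<Sum>v<N. \<Sum>w<N. A v w * z v * z w)"
    by (simp add: sum.distrib sum_distrib_left)
  finally show ?thesis using e1 e2 by simp
qed

lemma quad_S: "ip N x (mv N S x) = (\<Sum>v<N. \<Sum>w<N. A v w * (x v / sq v) * (x w / sq w))"
  unfolding ip_def mv_def S_def by (simp add: sum_distrib_left algebra_simps)

lemma norm_d: "ip N x x = (\<Sum>v<N. d v * (x v / sq v)^2)"
  unfolding ip_def by (intro sum.cong refl) (simp add: power2_eq_square sq_sq[symmetric] field_simps sq_pos[THEN less_imp_neq, symmetric])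

lemma rayleigh_le: "ip N x x - ip N x (mv N S x) = (\<Sum>v<N. \<Sum>w<N. A v w * (x v / sq v - x w / sq w)^2) / 2"
  unfolding quad_minus quad_S norm_d by simp

lemma rayleigh_ge: "ip N x x + ip N x (mv N S x) = (\<Sum>v<N. \<Sum>w<N. A v w * (x v / sq v + x w / sq w)^2) / 2"
  unfolding quad_plus quad_S norm_d by simp

lemma u0_norm: "ip N u0 u0 = 1"
proof -
  have "ip N u0 u0 = (\<Sum>v<N. d v / vol)"
    unfolding ip_def u0_def using vol_pos by (intro sum.cong refl) (simp add: sq_sq[symmetric] power2_eq_square)
  also have "\<dots> = 1" using vol_pos unfolding vol_def by (simp add: sum_divide_distrib[symmetric])
  finally show ?thesis .
qed

lemma u0_eigen: assumes "v < N" shows "mv N S u0 v = 1 * u0 v"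
proof -
  have "mv N S u0 v = (\<Sum>w<N. A v w / (sq v * sqrt vol))"
    unfolding mv_def S_def u0_def using sq_pos by (intro sum.cong refl) (simp add: field_simps sq_pos[THEN less_imp_neq, symmetric])
  also have "\<dots> = d v / (sq v * sqrt vol)" by (simp add: d_sum sum_divide_distrib)
  also have "\<dots> = u0 v" unfolding u0_def using sq_sq[of v] sq_pos[OF assms] vol_pos
    by (simp add: field_simps)
  finally show ?thesis by simp
qed

end

context sgraph begin
lemma spec_exists: "\<exists>u \<mu>. u 0 = u0 \<and> \<mu> 0 = 1 \<and> orthonormal N N u \<and> (\<forall>k<N. \<forall>i<N. mv N S (u k) i = \<mu> k * u k i)"
  by (rule spectral[OF symm_S _ u0_norm u0_eigen]) (use N2 in auto)
end

locale sgraph_spec = sgraph +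
  fixes u :: "nat \<Rightarrow> nat \<Rightarrow> real" and \<mu> :: "nat \<Rightarrow> real"
  assumes u_0: "u 0 = u0" and mu_0: "\<mu> 0 = 1" and on: "orthonormal N N u"
    and ev: "\<And>k i. k < N \<Longrightarrow> i < N \<Longrightarrow> mv N S (u k) i = \<mu> k * u k i"
begin

lemma complete: "i < N \<Longrightarrow> j < N \<Longrightarrow> (\<Sum>k<N. u k i * u k j) = (if i = j then 1 else 0)"
  by (rule orthonormal_complete[OF on])

lemma unorm: "k < N \<Longrightarrow> ip N (u k) (u k) = 1" using on unfolding orthonormal_def by simp
lemma uorth: "k < N \<Longrightarrow> l < N \<Longrightarrow> k \<noteq> l \<Longrightarrow> ip N (u k) (u l) = 0" using on unfolding orthonormal_def by simp

lemma rq: assumes "k < N" shows "ip N (u k) (mv N S (u k)) = \<mu> k"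
proof -
  have "ip N (u k) (mv N S (u k)) = ip N (u k) (\<lambda>i. \<mu> k * u k i)" by (rule ip_cong) (auto simp: ev assms)
  thus ?thesis using unorm[OF assms] by (simp add: ip_scale_right)
qed

lemma dsum_nonneg: "(\<Sum>v<N. \<Sum>w<N. A v w * (f v w)^2) \<ge> 0"
  by (intro sum_nonneg mult_nonneg_nonneg A_nonneg) auto

lemma mu_le1: "k < N \<Longrightarrow> \<mu> k \<le> 1"
  using rayleigh_le[of "u k"] rq[of k] unorm[of k] dsum_nonneg[of "\<lambda>v w. u k v / sq v - u k w / sq w"] by simp

lemma mu_ge: "k < N \<Longrightarrow> -1 \<le> \<mu> k"
  using rayleigh_ge[of "u k"] rq[of k] unorm[of k] dsum_nonneg[of "\<lambda>v w. u k v / sq v + u k w / sq w"] by simp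

lemma mu_lt1: assumes k: "0 < k" "k < N" shows "\<mu> k < 1"
proof (rule ccontr)
  assume "\<not> \<mu> k < 1"
  hence m1: "\<mu> k = 1" using mu_le1[OF k(2)] by simp
  define y where "y v = u k v / sq v" for v
  have "(\<Sum>v<N. \<Sum>w<N. A v w * (y v - y w)^2) = 0"
    using rayleigh_le[of "u k"] rq[OF k(2)] unorm[OF k(2)] m1 unfolding y_def by simp
  moreover have nn: "\<And>v. (\<Sum>w<N. A v w * (y v - y w)^2) \<ge> 0"
    by (intro sum_nonneg mult_nonneg_nonneg A_nonneg) auto
  ultimately have s1: "\<forall>v\<in>{..<N}. (\<Sum>w<N. A v w * (y v - y w)^2) = 0"
    using sum_nonneg_eq_0_iff[of "{..<N}" "\<lambda>v. \<Sum>w<N. A v w * (y v - y w)^2"] by simp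
  have z: "\<forall>v\<in>{..<N}. \<forall>w\<in>{..<N}. A v w * (y v - y w)^2 = 0"
  proof (intro ballI)
    fix v w assume v: "v \<in> {..<N}" and w: "w \<in> {..<N}"
    have "(\<Sum>w<N. A v w * (y v - y w)^2) = 0" using s1 v by blast
    moreover have "\<forall>w\<in>{..<N}. A v w * (y v - y w)^2 \<ge> 0" by (auto intro: mult_nonneg_nonneg A_nonneg)
    ultimately show "A v w * (y v - y w)^2 = 0" using sum_nonneg_eq_0_iff[of "{..<N}" "\<lambda>w. A v w * (y v - y w)^2"] w by simp
  qed
  have edge: "y v = y w" if "E v w" for v w
  proof -
    have "v < N" "w < N" using E_bound[OF that] by auto
    hence "A v w * (y v - y w)^2 = 0" using z by auto
    thus ?thesis using that unfolding A_def by simp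
  qed
  define c where "c = y 0 * sqrt vol"
  have uk: "u k v = c * u0 v" if "v < N" for v
  proof -
    have "y v = y 0" by (rule const_on_edges[of y v]) (use edge that in auto)
    hence "u k v = y 0 * sq v" using sq_pos[OF that] unfolding y_def[of v] by (simp add: field_simps)
    thus ?thesis unfolding c_def u0_def using vol_pos by simp
  qed
  have "ip N u0 (u k) = ip N u0 (\<lambda>v. c * u0 v)" by (rule ip_cong) (auto simp: uk)
  also have "\<dots> = c" by (simp add: ip_scale_right u0_norm)
  finally have "c = 0" using uorth[of 0 k] k u_0 by simp
  hence "ip N (u k) (u k) = 0" unfolding ip_def using uk by simp
  thus False using unorm[OF k(2)] by simp
qed

lemma trace_zero: "(\<Sum>k<N. \<mu> k) = 0"
proof -
  have "(\<Sum>k<N. \<mu> k) = (\<Sum>k<N. \<Sum>i<N. \<Sum>j<N. S i j * (u k i * u k j))"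
    by (intro sum.cong refl) (simp add: rq[symmetric] ip_def mv_def sum_distrib_left algebra_simps)
  also have "\<dots> = (\<Sum>i<N. \<Sum>k<N. \<Sum>j<N. S i j * (u k i * u k j))" by (rule sum.swap)
  also have "\<dots> = (\<Sum>i<N. \<Sum>j<N. \<Sum>k<N. S i j * (u k i * u k j))" by (intro sum.cong refl sum.swap)
  also have "\<dots> = (\<Sum>i<N. \<Sum>j<N. S i j * (if i = j then 1 else 0))"
    by (intro sum.cong refl) (simp add: sum_distrib_left[symmetric] complete)
  also have "\<dots> = (\<Sum>i<N. S i i)" by (intro sum.cong refl) (simp add: if_distrib sum.delta cong: if_cong)
  also have "\<dots> = 0" by (simp add: S_diag)
  finally show ?thesis .
qed

end

lemma mv_sum: "mv n M (\<lambda>w. \<Sum>k\<in>K. f k * g k w) v = (\<Sum>k\<in>K. f k * mv n M (g k) v)"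
  unfolding mv_def by (simp add: sum_distrib_left sum.swap[of _ K] algebra_simps)

context sgraph begin

lemma edges_const:
  assumes z: "(\<Sum>v<N. \<Sum>w<N. A v w * (y v - y w)^2) = 0" and v: "v < N"
  shows "y v = y 0"
proof -
  have nn: "\<And>v. (\<Sum>w<N. A v w * (y v - y w)^2) \<ge> 0"
    by (intro sum_nonneg mult_nonneg_nonneg A_nonneg) auto
  have s1: "\<forall>v\<in>{..<N}. (\<Sum>w<N. A v w * (y v - y w)^2) = 0"
    using sum_nonneg_eq_0_iff[of "{..<N}" "\<lambda>v. \<Sum>w<N. A v w * (y v - y w)^2"] z nn by simp
  have edge: "y a = y b" if "E a b" for a b
  proof -
    have ab: "a < N" "b < N" using E_bound[OF that] by auto
    have "(\<Sum>w<N. A a w * (y a - y w)^2) = 0" using s1 ab by blast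
    moreover have "\<forall>w\<in>{..<N}. A a w * (y a - y w)^2 \<ge> 0" by (auto intro: mult_nonneg_nonneg A_nonneg)
    ultimately have "A a b * (y a - y b)^2 = 0"
      using sum_nonneg_eq_0_iff[of "{..<N}" "\<lambda>w. A a w * (y a - y w)^2"] ab by simp
    thus ?thesis using that unfolding A_def by simp
  qed
  show ?thesis by (rule const_on_edges[of y v]) (use edge v in auto)
qed

lemma kernel_const:
  assumes h: "\<And>v. v < N \<Longrightarrow> d v * z v - (\<Sum>w<N. A v w * z w) = 0" and v: "v < N"
  shows "z v = z 0"
proof -
  have "(\<Sum>v<N. z v * (d v * z v - (\<Sum>w<N. A v w * z w))) = 0" using h by simp
  hence "(\<Sum>v<N. d v * (z v)^2) - (\<Sum>v<N. \<Sum>w<N. A v w * z v * z w) = 0"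
    by (simp add: algebra_simps sum_subtractf sum_distrib_left power2_eq_square)
  hence "(\<Sum>v<N. \<Sum>w<N. A v w * (z v - z w)^2) = 0" unfolding quad_minus by simp
  thus ?thesis using edges_const v by blast
qed

end

context sgraph_spec begin

definition cc :: "nat \<Rightarrow> nat \<Rightarrow> nat \<Rightarrow> real" where
  "cc i j k = u k i / sq i - u k j / sq j"

definition Rv :: "nat \<Rightarrow> nat \<Rightarrow> real" where
  "Rv i j = (\<Sum>k\<in>{1..<N}. (cc i j k)^2 / (1 - \<mu> k))"

lemma lessThan_split: "{..<N} = insert 0 {1..<N}" using N2 by auto

lemma sum_split0: "(\<Sum>k<N. f k) = f 0 + (\<Sum>k\<in>{1..<N}. f k)"
  unfolding lessThan_split by (subst sum.insert) auto

lemma cc0: assumes "i < N" "j < N" shows "cc i j 0 = 0"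
  unfolding cc_def u_0 u0_def using sq_pos[OF assms(1)] sq_pos[OF assms(2)] by simp

lemma eff_res: assumes i: "i < N" and j: "j < N"
  shows "effective_resistance N E i j = Rv i j"
proof -
  define a where "a k = cc i j k / (1 - \<mu> k)" for k
  define zz where "zz w = (\<Sum>k\<in>{1..<N}. a k * u k w)" for w
  define x where "x w = zz w / sq w" for w
  define P where "P x \<longleftrightarrow> (\<forall>v<N. real (degree N E v) * x v - (\<Sum>w | w < N \<and> E v w. x w)
                 = (if v = i then 1 else 0) - (if v = j then 1 else 0))" for x
  have Peq: "P y \<longleftrightarrow> (\<forall>v<N. d v * y v - (\<Sum>w<N. A v w * y w) = (if v = i then 1 else 0) - (if v = j then 1 else 0))" for y
    unfolding P_def d_def[symmetric] nbr_sum ..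
  have Px: "P x" unfolding Peq
  proof (intro allI impI)
    fix v assume v: "v < N"
    have sqv: "sq v \<noteq> 0" using sq_pos[OF v] by simp
    have mvz: "mv N S zz v = (\<Sum>k\<in>{1..<N}. a k * (\<mu> k * u k v))"
      unfolding zz_def mv_sum using v by (intro sum.cong refl) (simp add: ev)
    have t1: "d v * x v = sq v * zz v" unfolding x_def sq_sq[symmetric] using sqv by simp
    have t2: "(\<Sum>w<N. A v w * x w) = sq v * mv N S zz v"
      unfolding mv_def S_def x_def sum_distrib_left using sqv by (intro sum.cong refl) (simp add: field_simps)
    have "d v * x v - (\<Sum>w<N. A v w * x w) = sq v * (\<Sum>k\<in>{1..<N}. a k * (1 - \<mu> k) * u k v)"
      unfolding t1 t2 mvz zz_def by (simp add: algebra_simps sum_subtractf sum_distrib_left)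
    also have "(\<Sum>k\<in>{1..<N}. a k * (1 - \<mu> k) * u k v) = (\<Sum>k\<in>{1..<N}. cc i j k * u k v)"
    proof (intro sum.cong refl)
      fix k assume "k \<in> {1..<N}"
      hence "1 - \<mu> k \<noteq> 0" using mu_lt1[of k] by auto
      thus "a k * (1 - \<mu> k) * u k v = cc i j k * u k v" unfolding a_def by simp
    qed
    also have "\<dots> = (\<Sum>k<N. cc i j k * u k v)" using cc0[OF i j] by (simp add: sum_split0)
    also have "\<dots> = (\<Sum>k<N. u k i * u k v) / sq i - (\<Sum>k<N. u k j * u k v) / sq j"
      unfolding cc_def by (simp add: sum_divide_distrib sum_subtractf algebra_simps)
    also have "\<dots> = (if i = v then 1 else 0) / sq i - (if j = v then 1 else 0) / sq j"
      using i j v by (simp add: complete)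
    also have "sq v * \<dots> = (if v = i then 1 else 0) - (if v = j then 1 else 0)"
      using sqv by auto
    finally show "d v * x v - (\<Sum>w<N. A v w * x w) = (if v = i then 1 else 0) - (if v = j then 1 else 0)" .
  qed
  have xval: "x i - x j = Rv i j"
  proof -
    have "x i - x j = (\<Sum>k\<in>{1..<N}. a k * cc i j k)"
      unfolding x_def zz_def cc_def by (simp add: sum_divide_distrib sum_subtractf algebra_simps)
    also have "\<dots> = Rv i j" unfolding Rv_def a_def by (intro sum.cong refl) (simp add: power2_eq_square)
    finally show ?thesis .
  qed
  have uniq: "r = Rv i j" if "P y" "r = y i - y j" for r y
  proof -
    define z where "z w = y w - x w" for w
    have "d v * z v - (\<Sum>w<N. A v w * z w) = 0" if v: "v < N" for v
    proof -
      have "d v * y v - (\<Sum>w<N. A v w * y w) = d v * x v - (\<Sum>w<N. A v w * x w)"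
        using \<open>P y\<close> Px v unfolding Peq by simp
      thus ?thesis unfolding z_def by (simp add: algebra_simps sum_subtractf)
    qed
    hence "z i = z 0" "z j = z 0" using kernel_const i j by blast+
    thus ?thesis using that(2) xval unfolding z_def by simp
  qed
  show ?thesis unfolding effective_resistance_def P_def[symmetric]
  proof (rule the_equality)
    show "\<exists>x. P x \<and> Rv i j = x i - x j" using Px xval by (intro exI[of _ x]) simp
  next
    fix r assume "\<exists>y. P y \<and> r = y i - y j"
    then obtain y where "P y" "r = y i - y j" by blast
    thus "r = Rv i j" by (rule uniq)
  qed
qed

end

lemma pairs_half:
  fixes F :: "nat \<Rightarrow> nat \<Rightarrow> real"
  assumes sym: "\<And>i j. F i j = F j i" and diag: "\<And>i. F i i = 0"
  shows "(\<Sum>(i, j)\<in>{(i, j). i < j \<and> j < n}. F i j) = (\<Sum>i<n. \<Sum>j<n. F i j) / 2"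
proof (induction n)
  case 0 thus ?case by simp
next
  case (Suc n)
  have set: "{(i, j). i < j \<and> j < Suc n} = {(i, j). i < j \<and> j < n} \<union> (\<lambda>i. (i, n)) ` {..<n}"
    by auto
  have fin: "finite {(i, j). i < j \<and> j < n}"
    by (rule finite_subset[of _ "{..<n} \<times> {..<n}"]) auto
  have disj: "{(i, j). i < j \<and> j < n} \<inter> (\<lambda>i. (i, n)) ` {..<n} = {}" by auto
  have "(\<Sum>(i, j)\<in>{(i, j). i < j \<and> j < Suc n}. F i j)
      = (\<Sum>(i, j)\<in>{(i, j). i < j \<and> j < n}. F i j) + (\<Sum>(i, j)\<in>(\<lambda>i. (i, n)) ` {..<n}. F i j)"
    unfolding set by (rule sum.union_disjoint) (use fin disj in auto)
  also have "(\<Sum>(i, j)\<in>(\<lambda>i. (i, n)) ` {..<n}. F i j) = (\<Sum>i<n. F i n)"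
    by (subst sum.reindex) (auto simp: inj_on_def)
  also have "(\<Sum>i<Suc n. \<Sum>j<Suc n. F i j) = (\<Sum>i<n. \<Sum>j<n. F i j) + 2 * (\<Sum>i<n. F i n)"
    by (simp add: sum.distrib diag sym[of n])
  ultimately show ?case using Suc.IH by simp
qed

lemma pairsum:
  fixes d a :: "nat \<Rightarrow> real"
  shows "(\<Sum>i<n. \<Sum>j<n. (d i + d j) * (a i - a j)^2) =
    2 * real n * (\<Sum>i<n. d i * (a i)^2) + 2 * (\<Sum>i<n. d i) * (\<Sum>i<n. (a i)^2) - 4 * (\<Sum>i<n. d i * a i) * (\<Sum>i<n. a i)"
proof -
  have eq: "(d i + d j) * (a i - a j)^2 = (d i * (a i)^2) * 1 + d i * (a j)^2 + (-2 * (d i * a i)) * a j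
      + (a i)^2 * d j + 1 * (d j * (a j)^2) + (-2 * a i) * (d j * a j)" for i j
    by (simp add: power2_eq_square algebra_simps)
  have "(\<Sum>i<n. \<Sum>j<n. (d i + d j) * (a i - a j)^2) =
     (\<Sum>i<n. d i * (a i)^2) * (\<Sum>j<n. 1) + (\<Sum>i<n. d i) * (\<Sum>j<n. (a j)^2) + (\<Sum>i<n. -2 * (d i * a i)) * (\<Sum>j<n. a j)
     + (\<Sum>i<n. (a i)^2) * (\<Sum>j<n. d j) + (\<Sum>i<n. 1) * (\<Sum>j<n. d j * (a j)^2) + (\<Sum>i<n. -2 * a i) * (\<Sum>j<n. d j * a j)"
    by (simp only: eq sum.distrib sum_product)
  moreover have "(\<Sum>i<n. -2 * (d i * a i)) = -2 * (\<Sum>i<n. d i * a i)" by (simp add: sum_distrib_left)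
  moreover have "(\<Sum>i<n. -2 * a i) = -2 * (\<Sum>i<n. a i)" by (simp add: sum_distrib_left)
  moreover have "(\<Sum>i<n. 1::real) = real n" by simp
  ultimately show ?thesis by (simp add: algebra_simps)
qed

context sgraph_spec begin

lemma cc_swap: "cc j i k = - cc i j k" unfolding cc_def by simp

lemma Rv_sym: "Rv i j = Rv j i" unfolding Rv_def cc_swap[of i j] by simp
lemma Rv_diag: "Rv i i = 0" unfolding Rv_def cc_def by simp

lemma inner_k: assumes k: "k \<in> {1..<N}"
  shows "(\<Sum>i<N. \<Sum>j<N. (d i + d j) * (cc i j k)^2) = 2 * real N + 2 * vol * (\<Sum>i<N. (u k i)^2 / d i)"
proof -
  define a where "a i = u k i / sq i" for i
  have cca: "cc i j k = a i - a j" for i j unfolding cc_def a_def ..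
  have s1: "(\<Sum>i<N. d i * (a i)^2) = 1"
  proof -
    have "(\<Sum>i<N. d i * (a i)^2) = (\<Sum>i<N. u k i * u k i)"
      unfolding a_def using sq_pos
      by (intro sum.cong refl) (simp add: sq_sq[symmetric] power2_eq_square field_simps less_imp_neq[symmetric])
    also have "\<dots> = 1" using unorm[of k] k unfolding ip_def by simp
    finally show ?thesis .
  qed
  have s2: "(\<Sum>i<N. (a i)^2) = (\<Sum>i<N. (u k i)^2 / d i)"
    unfolding a_def by (intro sum.cong refl) (simp add: power2_eq_square sq_sq[symmetric])
  have s3: "(\<Sum>i<N. d i * a i) = 0"
  proof -
    have "(\<Sum>i<N. d i * a i) = (\<Sum>i<N. sqrt vol * (u0 i * u k i))"
      unfolding a_def u0_def using sq_pos vol_pos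
      by (intro sum.cong refl) (simp add: sq_sq[symmetric] field_simps less_imp_neq[symmetric])
    also have "\<dots> = sqrt vol * ip N u0 (u k)" unfolding ip_def by (simp add: sum_distrib_left)
    also have "ip N u0 (u k) = 0" using uorth[of 0 k] k u_0 by simp
    finally show ?thesis by simp
  qed
  show ?thesis unfolding cca pairsum s1 s2 s3 vol_def by simp
qed

lemma Rplus_formula:
  "additive_degree_kirchhoff N E = (\<Sum>k\<in>{1..<N}. (real N + vol * (\<Sum>i<N. (u k i)^2 / d i)) / (1 - \<mu> k))"
proof -
  have "additive_degree_kirchhoff N E = (\<Sum>(i, j)\<in>{(i, j). i < j \<and> j < N}. (d i + d j) * Rv i j)"
    unfolding additive_degree_kirchhoff_def
    by (intro sum.cong refl) (auto simp: eff_res d_def)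
  also have "\<dots> = (\<Sum>i<N. \<Sum>j<N. (d i + d j) * Rv i j) / 2"
    by (rule pairs_half) (auto simp: Rv_sym Rv_diag)
  also have "(\<Sum>i<N. \<Sum>j<N. (d i + d j) * Rv i j) = (\<Sum>i<N. \<Sum>j<N. \<Sum>k\<in>{1..<N}. (d i + d j) * ((cc i j k)^2 / (1 - \<mu> k)))"
    unfolding Rv_def by (simp add: sum_distrib_left)
  also have "\<dots> = (\<Sum>i<N. \<Sum>k\<in>{1..<N}. \<Sum>j<N. (d i + d j) * ((cc i j k)^2 / (1 - \<mu> k)))"
    by (intro sum.cong refl sum.swap)
  also have "\<dots> = (\<Sum>k\<in>{1..<N}. \<Sum>i<N. \<Sum>j<N. (d i + d j) * ((cc i j k)^2 / (1 - \<mu> k)))"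
    by (rule sum.swap)
  also have "\<dots> = (\<Sum>k\<in>{1..<N}. (\<Sum>i<N. \<Sum>j<N. (d i + d j) * (cc i j k)^2) / (1 - \<mu> k))"
    by (simp add: sum_divide_distrib)
  also have "\<dots> = (\<Sum>k\<in>{1..<N}. (2 * real N + 2 * vol * (\<Sum>i<N. (u k i)^2 / d i)) / (1 - \<mu> k))"
    by (intro sum.cong refl) (simp add: inner_k)
  also have "\<dots> = 2 * (\<Sum>k\<in>{1..<N}. (real N + vol * (\<Sum>i<N. (u k i)^2 / d i)) / (1 - \<mu> k))"
  proof -
    define X where "X k = (\<Sum>i<N. (u k i)^2 / d i)" for k
    show ?thesis unfolding X_def[symmetric] sum_distrib_left by (intro sum.cong refl) (simp add: distrib_left mult.assoc)
  qed
  finally show ?thesis by simp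
qed

end

context sgraph begin

lemma vol_edges: "vol = 2 * real (num_edges N E)"
proof -
  define P1 where "P1 = {(a, b). a < b \<and> b < N \<and> E a b}"
  define P2 where "P2 = {(a, b). b < a \<and> a < N \<and> E a b}"
  have fin1: "finite P1" unfolding P1_def by (rule finite_subset[of _ "{..<N} \<times> {..<N}"]) auto
  have P2: "P2 = (\<lambda>(a, b). (b, a)) ` P1"
  proof (intro equalityI subsetI)
    fix p assume "p \<in> P2"
    then obtain a b where p: "p = (a, b)" "b < a" "a < N" "E a b" unfolding P2_def by blast
    hence "(b, a) \<in> P1" unfolding P1_def using E_sym by auto
    thus "p \<in> (\<lambda>(a, b). (b, a)) ` P1" unfolding p(1) by (rule rev_image_eqI) simp
  next
    fix p assume "p \<in> (\<lambda>(a, b). (b, a)) ` P1"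
    then obtain a b where "(a, b) \<in> P1" "p = (b, a)" by auto
    thus "p \<in> P2" unfolding P1_def P2_def using E_sym by auto
  qed
  have fin2: "finite P2" unfolding P2 using fin1 by simp
  have card2: "card P2 = card P1" unfolding P2 by (rule card_image) (auto simp: inj_on_def split: prod.splits)
  have disj: "P1 \<inter> P2 = {}" unfolding P1_def P2_def by auto
  have un: "(SIGMA v:{..<N}. {w. w < N \<and> E v w}) = P1 \<union> P2"
  proof (intro equalityI subsetI)
    fix p assume "p \<in> (SIGMA v:{..<N}. {w. w < N \<and> E v w})"
    then obtain a b where p: "p = (a, b)" "a < N" "b < N" "E a b" by auto
    have "a \<noteq> b" using E_irr p(4) by auto
    hence "a < b \<or> b < a" by auto
    thus "p \<in> P1 \<union> P2" unfolding P1_def P2_def using p by auto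
  next
    fix p assume "p \<in> P1 \<union> P2"
    thus "p \<in> (SIGMA v:{..<N}. {w. w < N \<and> E v w})" unfolding P1_def P2_def by auto
  qed
  have "vol = real (\<Sum>v<N. card {w. w < N \<and> E v w})" unfolding vol_def d_def degree_def by simp
  also have "(\<Sum>v<N. card {w. w < N \<and> E v w}) = card (SIGMA v:{..<N}. {w. w < N \<and> E v w})"
    by (rule card_SigmaI[symmetric]) auto
  also have "\<dots> = card P1 + card P2" unfolding un by (rule card_Un_disjoint[OF fin1 fin2 disj])
  also have "card P1 = num_edges N E" unfolding num_edges_def P1_def by simp
  finally show ?thesis using card2 unfolding P1_def by (simp add: num_edges_def)
qed

end

lemma mat_mult_entry: fixes f g :: "nat \<times> nat \<Rightarrow> 'a::comm_semiring_1"
  assumes "i < n" "j < n"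
  shows "(mat n n f * mat n n g) $$ (i, j) = (\<Sum>l<n. f (i, l) * g (l, j))"
  using assms by (simp add: scalar_prod_def lessThan_atLeast0)

lemma prod_list_upt: "(\<Prod>a\<leftarrow>map f [0..<n]. g a) = (\<Prod>k<n. g (f k))"
  by (induction n) (simp_all add: mult.commute)

lemma order_prod_lin: fixes \<mu> :: "nat \<Rightarrow> real" assumes "finite K"
  shows "order y (\<Prod>k\<in>K. [:- \<mu> k, 1:]) = card {k\<in>K. \<mu> k = y}"
  using assms
proof (induction K rule: finite_induct)
  case empty thus ?case by simp
next
  case (insert k F)
  have h1: "[:- \<mu> k, 1:] \<noteq> 0" by simp
  have h2: "(\<Prod>k\<in>F. [:- \<mu> k, 1:]) \<noteq> 0" using insert(1) by (subst prod_zero_iff) auto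
  have nz: "[:- \<mu> k, 1:] * (\<Prod>k\<in>F. [:- \<mu> k, 1:]) \<noteq> 0" using h1 h2 mult_eq_0_iff by blast
  have pi: "(\<Prod>k'\<in>insert k F. [:- \<mu> k', 1:]) = [:- \<mu> k, 1:] * (\<Prod>k\<in>F. [:- \<mu> k, 1:])"
    by (rule prod.insert) (use insert in auto)
  have o1: "order y [:- \<mu> k, 1:] = (if \<mu> k = y then 1 else 0)"
  proof (cases "\<mu> k = y")
    case True thus ?thesis using order_power_n_n[of y 1] by simp
  next
    case False
    have "poly [:- \<mu> k, 1:] y \<noteq> 0" using False by simp
    thus ?thesis using False by (simp add: order_0I)
  qed
  have "{k'\<in>insert k F. \<mu> k' = y} = (if \<mu> k = y then insert k {k'\<in>F. \<mu> k' = y} else {k'\<in>F. \<mu> k' = y})"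
    by auto
  hence c: "card {k'\<in>insert k F. \<mu> k' = y} = (if \<mu> k = y then 1 else 0) + card {k'\<in>F. \<mu> k' = y}"
    using insert(1,2) by simp
  show ?case unfolding pi order_mult[OF nz] o1 c insert(3) ..
qed

context sgraph_spec begin

definition Vm :: "real mat" where "Vm = mat N N (\<lambda>(v, k). u k v / sq v)"
definition Wm :: "real mat" where "Wm = mat N N (\<lambda>(k, v). u k v * sq v)"
definition Lm :: "real mat" where "Lm = mat N N (\<lambda>(i, j). if i = j then \<mu> i else 0)"

lemma P_entry: "v < N \<Longrightarrow> w < N \<Longrightarrow> transition_matrix N E $$ (v, w) = A v w / d v"
  unfolding transition_matrix_def A_def d_def by simp

lemma WV: "Wm * Vm = 1\<^sub>m N"
proof (rule eq_matI)
  fix k l assume k: "k < dim_row (1\<^sub>m N :: real mat)" and l: "l < dim_col (1\<^sub>m N :: real mat)"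
  hence kl: "k < N" "l < N" by auto
  have "(Wm * Vm) $$ (k, l) = (\<Sum>v<N. u k v * sq v * (u l v / sq v))"
    unfolding Wm_def Vm_def mat_mult_entry[OF kl] by simp
  also have "\<dots> = ip N (u k) (u l)" unfolding ip_def using sq_pos by (intro sum.cong refl) (simp add: less_imp_neq[symmetric])
  also have "\<dots> = 1\<^sub>m N $$ (k, l)" using on kl unfolding orthonormal_def by simp
  finally show "(Wm * Vm) $$ (k, l) = 1\<^sub>m N $$ (k, l)" .
qed (auto simp: Wm_def Vm_def)

lemma VW: "Vm * Wm = 1\<^sub>m N"
proof (rule eq_matI)
  fix v w assume v: "v < dim_row (1\<^sub>m N :: real mat)" and w: "w < dim_col (1\<^sub>m N :: real mat)"
  hence vw: "v < N" "w < N" by auto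
  have "(Vm * Wm) $$ (v, w) = (\<Sum>k<N. u k v / sq v * (u k w * sq w))"
    unfolding Wm_def Vm_def mat_mult_entry[OF vw] by simp
  also have "\<dots> = sq w / sq v * (\<Sum>k<N. u k v * u k w)" by (simp add: sum_distrib_left algebra_simps)
  also have "\<dots> = 1\<^sub>m N $$ (v, w)" using vw sq_pos[of v] sq_pos[of w] by (simp add: complete)
  finally show "(Vm * Wm) $$ (v, w) = 1\<^sub>m N $$ (v, w)" .
qed (auto simp: Wm_def Vm_def)

lemma PV: "transition_matrix N E * Vm = Vm * Lm"
proof (rule eq_matI)
  fix v k assume v: "v < dim_row (Vm * Lm)" and k: "k < dim_col (Vm * Lm)"
  hence vk: "v < N" "k < N" by (auto simp: Vm_def Lm_def)
  have "(transition_matrix N E * Vm) $$ (v, k) = (\<Sum>w<N. A v w / d v * (u k w / sq w))"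
    unfolding Vm_def transition_matrix_def mat_mult_entry[OF vk] by (intro sum.cong refl) (auto simp: A_def d_def)
  also have "\<dots> = mv N S (u k) v / sq v"
    unfolding mv_def S_def sum_divide_distrib using sq_pos[of v] vk(1)
    by (intro sum.cong refl) (simp add: sq_sq[symmetric])
  also have "\<dots> = \<mu> k * u k v / sq v" using ev vk by simp
  also have "\<dots> = (\<Sum>j<N. u j v / sq v * (if j = k then \<mu> j else 0))"
    using vk by (simp add: if_distrib sum.delta cong: if_cong)
  also have "\<dots> = (Vm * Lm) $$ (v, k)"
    unfolding Vm_def Lm_def mat_mult_entry[OF vk] by simp
  finally show "(transition_matrix N E * Vm) $$ (v, k) = (Vm * Lm) $$ (v, k)" .
qed (auto simp: Vm_def Lm_def transition_matrix_def)

lemma char_poly_P: "char_poly (transition_matrix N E) = (\<Prod>k<N. [:- \<mu> k, 1:])"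
proof -
  have P: "transition_matrix N E \<in> carrier_mat N N" unfolding transition_matrix_def by simp
  have V: "Vm \<in> carrier_mat N N" and W: "Wm \<in> carrier_mat N N" and L: "Lm \<in> carrier_mat N N"
    unfolding Vm_def Wm_def Lm_def by simp_all
  have "transition_matrix N E = transition_matrix N E * (Vm * Wm)" using P by (simp add: VW)
  also have "\<dots> = (transition_matrix N E * Vm) * Wm" using P V W by (simp add: assoc_mult_mat)
  also have "\<dots> = Vm * Lm * Wm" by (simp add: PV)
  finally have eq: "transition_matrix N E = Vm * Lm * Wm" .
  have "similar_mat_wit (transition_matrix N E) Lm Vm Wm"
    unfolding similar_mat_wit_def Let_def using P V W L VW WV eq by auto
  hence "char_poly (transition_matrix N E) = char_poly Lm"
    by (intro char_poly_similar) (auto simp: similar_mat_def)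
  also have "char_poly Lm = (\<Prod>a\<leftarrow>diag_mat Lm. [:- a, 1:])"
    by (rule char_poly_upper_triangular[OF L]) (auto simp: upper_triangular_def Lm_def)
  also have "diag_mat Lm = map \<mu> [0..<N]" unfolding diag_mat_def Lm_def by simp
  also have "(\<Prod>a\<leftarrow>map \<mu> [0..<N]. [:- a, 1:]) = (\<Prod>k<N. [:- \<mu> k, 1:])" by (rule prod_list_upt)
  finally show ?thesis .
qed

end

context sgraph_spec begin

definition ell :: real where "ell = Max (\<mu> ` {1..<N})"

lemma K_ne: "{1..<N} \<noteq> {}" using N2 by auto

lemma ell_in: "\<exists>k\<in>{1..<N}. \<mu> k = ell"
proof -
  have "ell \<in> \<mu> ` {1..<N}" unfolding ell_def by (rule Max_in) (use K_ne in auto)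
  then obtain k where "k \<in> {1..<N}" "ell = \<mu> k" by blast
  thus ?thesis by auto
qed

lemma ell_ge: "k \<in> {1..<N} \<Longrightarrow> \<mu> k \<le> ell"
  unfolding ell_def by (rule Max_ge) auto

lemma ell_lt1: "ell < 1"
proof -
  obtain k where k: "k \<in> {1..<N}" "\<mu> k = ell" using ell_in by blast
  have "\<mu> k < 1" using k(1) by (intro mu_lt1) auto
  thus ?thesis using k(2) by simp
qed

lemma mu_le_ell_or_0: "k < N \<Longrightarrow> k = 0 \<or> \<mu> k \<le> ell"
  using ell_ge by (cases k) auto

lemma count_roots:
  "(\<Sum>y\<in>{y. poly (\<Prod>k<N. [:- \<mu> k, 1:]) y = 0 \<and> x \<le> y}. order y (\<Prod>k<N. [:- \<mu> k, 1:]))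
     = card {k\<in>{..<N}. x \<le> \<mu> k}"
proof -
  define p where "p = (\<Prod>k<N. [:- \<mu> k, 1:])"
  define Sx where "Sx = {k\<in>{..<N}. x \<le> \<mu> k}"
  have pz: "poly p y = 0 \<longleftrightarrow> (\<exists>k\<in>{..<N}. y - \<mu> k = 0)" for y
  proof -
    have "poly p y = (\<Prod>k<N. (y - \<mu> k))" unfolding p_def poly_prod by (intro prod.cong refl) simp
    thus ?thesis by (simp only: prod_zero_iff[OF finite_lessThan])
  qed
  have roots: "{y. poly p y = 0 \<and> x \<le> y} = \<mu> ` Sx"
  proof (intro equalityI subsetI)
    fix y assume "y \<in> {y. poly p y = 0 \<and> x \<le> y}"
    then obtain k where k: "k < N" "y = \<mu> k" "x \<le> y" using pz by auto
    hence "k \<in> Sx" unfolding Sx_def by simp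
    thus "y \<in> \<mu> ` Sx" using k(2) by (rule rev_image_eqI)
  next
    fix y assume "y \<in> \<mu> ` Sx"
    then obtain k where k: "k \<in> Sx" "y = \<mu> k" by blast
    hence "poly p y = 0" using pz unfolding Sx_def by auto
    thus "y \<in> {y. poly p y = 0 \<and> x \<le> y}" using k unfolding Sx_def by simp
  qed
  have "(\<Sum>y\<in>\<mu> ` Sx. order y p) = (\<Sum>y\<in>\<mu> ` Sx. card {k\<in>Sx. \<mu> k = y})"
  proof (intro sum.cong refl)
    fix y assume "y \<in> \<mu> ` Sx"
    hence "x \<le> y" unfolding Sx_def by auto
    hence "{k\<in>{..<N}. \<mu> k = y} = {k\<in>Sx. \<mu> k = y}" unfolding Sx_def by auto
    moreover have "order y p = card {k\<in>{..<N}. \<mu> k = y}" unfolding p_def by (rule order_prod_lin) simp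
    ultimately show "order y p = card {k\<in>Sx. \<mu> k = y}" by simp
  qed
  also have "\<dots> = card Sx"
  proof -
    have "card Sx = sum (\<lambda>_. 1::nat) Sx" by (rule card_eq_sum)
    also have "\<dots> = sum (\<lambda>y. sum (\<lambda>_. 1::nat) {k. k \<in> Sx \<and> \<mu> k = y}) (\<mu> ` Sx)"
      by (rule sum.image_gen) (simp add: Sx_def)
    also have "\<dots> = (\<Sum>y\<in>\<mu> ` Sx. card {k\<in>Sx. \<mu> k = y})" by (simp only: card_eq_sum[symmetric])
    finally show ?thesis by simp
  qed
  finally have "(\<Sum>y\<in>{y. poly p y = 0 \<and> x \<le> y}. order y p) = card Sx" unfolding roots .
  thus ?thesis unfolding p_def Sx_def .
qed

lemma lam2_eq: "second_largest_eigenvalue (transition_matrix N E) = ell"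
  unfolding second_largest_eigenvalue_def kth_largest_root_def char_poly_P count_roots
proof (rule Greatest_equality)
  obtain k where k: "k \<in> {1..<N}" "\<mu> k = ell" using ell_in by blast
  have "{0, k} \<subseteq> {k\<in>{..<N}. ell \<le> \<mu> k}" using k ell_lt1 mu_0 N2 by auto
  moreover have "card {0, k} = 2" using k by auto
  moreover have "finite {k\<in>{..<N}. ell \<le> \<mu> k}" by simp
  ultimately show "2 \<le> card {k\<in>{..<N}. ell \<le> \<mu> k}"
    using card_mono[of "{k\<in>{..<N}. ell \<le> \<mu> k}" "{0, k}"] by simp
next
  fix y assume y: "2 \<le> card {k\<in>{..<N}. y \<le> \<mu> k}"
  show "y \<le> ell"
  proof (rule ccontr)
    assume "\<not> y \<le> ell"
    hence "{k\<in>{..<N}. y \<le> \<mu> k} \<subseteq> {0}" using mu_le_ell_or_0 by force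
    hence "card {k\<in>{..<N}. y \<le> \<mu> k} \<le> card {0::nat}" by (intro card_mono) auto
    thus False using y by simp
  qed
qed

lemma sum_mu_K: "(\<Sum>k\<in>{1..<N}. \<mu> k) = -1"
  using trace_zero mu_0 by (simp add: sum_split0)

lemma sum_X: "vol * (\<Sum>k\<in>{1..<N}. (\<Sum>i<N. (u k i)^2 / d i)) = vol * (\<Sum>j<N. 1 / d j) - real N"
proof -
  have "(\<Sum>k\<in>{1..<N}. (\<Sum>i<N. (u k i)^2 / d i)) = (\<Sum>i<N. (\<Sum>k\<in>{1..<N}. (u k i)^2) / d i)"
    by (subst sum.swap) (simp add: sum_divide_distrib)
  also have "\<dots> = (\<Sum>i<N. (1 / d i - 1 / vol))"
  proof (intro sum.cong refl)
    fix i assume i: "i \<in> {..<N}"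
    have "(\<Sum>k<N. (u k i)^2) = 1" using complete[of i i] i by (simp add: power2_eq_square)
    hence "(\<Sum>k\<in>{1..<N}. (u k i)^2) = 1 - (u0 i)^2" using u_0 by (simp add: sum_split0)
    also have "(u0 i)^2 = d i / vol" unfolding u0_def using vol_pos
      by (simp add: power2_eq_square sq_sq[symmetric])
    finally show "(\<Sum>k\<in>{1..<N}. (u k i)^2) / d i = 1 / d i - 1 / vol"
      using d_pos[of i] i vol_pos by (simp add: field_simps)
  qed
  also have "\<dots> = (\<Sum>j<N. 1 / d j) - real N / vol" by (simp add: sum_subtractf)
  finally have h: "(\<Sum>k\<in>{1..<N}. (\<Sum>i<N. (u k i)^2 / d i)) = (\<Sum>j<N. 1 / d j) - real N / vol" .
  have "vol * (\<Sum>k\<in>{1..<N}. (\<Sum>i<N. (u k i)^2 / d i)) = vol * (\<Sum>j<N. 1 / d j) - vol * (real N / vol)"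
    unfolding h by (simp add: right_diff_distrib)
  thus ?thesis using vol_pos by simp
qed

lemma main_bound:
  "additive_degree_kirchhoff N E \<le> real N * ((real N - real_of_int \<lfloor>(ell * (real N - 1) + 1) / (ell + 1)\<rfloor> - 2) / (1 - ell)
      + real_of_int \<lfloor>(ell * (real N - 1) + 1) / (ell + 1)\<rfloor> / 2
      + 1 / (ell * (real N - real_of_int \<lfloor>(ell * (real N - 1) + 1) / (ell + 1)\<rfloor> - 2) - real_of_int \<lfloor>(ell * (real N - 1) + 1) / (ell + 1)\<rfloor> + 2))
     + 1 / (1 - ell) * (2 * real (num_edges N E) * (\<Sum>j<N. 1 / real (degree N E j)) - real N)"
proof -
  define X where "X k = (\<Sum>i<N. (u k i)^2 / d i)" for k
  have X0: "X k \<ge> 0" for k unfolding X_def using d_nonneg by (intro sum_nonneg divide_nonneg_nonneg) auto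
  have mpos: "1 - \<mu> k > 0" if "k \<in> {1..<N}" for k using mu_lt1[of k] that by auto
  have lpos: "1 - ell > 0" using ell_lt1 by simp
  define kk where "kk = \<lfloor>(ell * (real N - 1) + 1) / (ell + 1)\<rfloor>"
  define bnd where "bnd = (real N - real_of_int kk - 2) / (1 - ell) + real_of_int kk / 2
      + 1 / (ell * (real N - real_of_int kk - 2) - real_of_int kk + 2)"
  have eq1: "additive_degree_kirchhoff N E = real N * (\<Sum>k\<in>{1..<N}. 1 / (1 - \<mu> k)) + (\<Sum>k\<in>{1..<N}. vol * X k / (1 - \<mu> k))"
    unfolding Rplus_formula X_def[symmetric]
    by (simp add: sum_distrib_left sum.distrib add_divide_distrib)
  have T1: "(\<Sum>k\<in>{1..<N}. vol * X k / (1 - \<mu> k)) \<le> (\<Sum>k\<in>{1..<N}. vol * X k / (1 - ell))"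
  proof (intro sum_mono divide_left_mono)
    fix k assume k: "k \<in> {1..<N}"
    show "1 - ell \<le> 1 - \<mu> k" using ell_ge[OF k] by simp
    show "0 \<le> vol * X k" using vol_pos X0[of k] by simp
    show "0 < (1 - \<mu> k) * (1 - ell)" using mpos[OF k] lpos by simp
  qed
  have T2: "(\<Sum>k\<in>{1..<N}. vol * X k / (1 - ell)) = 1 / (1 - ell) * (vol * (\<Sum>j<N. 1 / d j) - real N)"
    using sum_X unfolding X_def[symmetric] by (simp add: sum_divide_distrib[symmetric] sum_distrib_left[symmetric])
  have S: "(\<Sum>k\<in>{1..<N}. 1 / (1 - \<mu> k)) \<le> bnd"
    unfolding bnd_def kk_def
    by (rule convex_bound[of "{1..<N}" N \<mu> ell]) (use N2 ell_lt1 sum_mu_K mu_ge ell_ge in auto)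
  have "real N * (\<Sum>k\<in>{1..<N}. 1 / (1 - \<mu> k)) \<le> real N * bnd"
    using S by (rule mult_left_mono) simp
  hence "additive_degree_kirchhoff N E \<le> real N * bnd + 1 / (1 - ell) * (vol * (\<Sum>j<N. 1 / d j) - real N)"
    using eq1 T1 T2 by linarith
  thus ?thesis unfolding bnd_def kk_def vol_edges d_def by (simp add: mult.assoc)
qed

end

theorem corollary5:
  fixes N :: nat and E :: "nat \<Rightarrow> nat \<Rightarrow> bool"
  assumes "simple_graph N E" and "connected_graph N E" and "N \<ge> 2"
  defines "lam2 \<equiv> second_largest_eigenvalue (transition_matrix N E)"
  defines "k \<equiv> \<lfloor>(lam2 * (real N - 1) + 1) / (lam2 + 1)\<rfloor>"
  defines "theta \<equiv> lam2 * (real N - real_of_int k - 2) - real_of_int k + 2"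
  shows "additive_degree_kirchhoff N E
     \<le> real N * ((real N - real_of_int k - 2) / (1 - lam2) + real_of_int k / 2 + 1 / theta)
       + 1 / (1 - lam2) * (2 * real (num_edges N E) * (\<Sum>j<N. 1 / real (degree N E j)) - real N)"
proof -
  interpret sgraph N E using assms(1-3) by unfold_locales
  obtain u \<mu> where spec: "u 0 = u0" "\<mu> 0 = 1" "orthonormal N N u" "\<forall>k<N. \<forall>i<N. mv N S (u k) i = \<mu> k * u k i"
    using spec_exists by blast
  interpret sgraph_spec N E u \<mu> using spec by unfold_locales auto
  have "lam2 = ell" unfolding lam2_def by (rule lam2_eq)
  thus ?thesis unfolding k_def theta_def using main_bound by simp
qed


end
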